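(* Let $T$ be a non-star tree containing an edge $xy$ with $d_T(x)=1$ and $d_T(y)\ge 3$. Suppose that for every neighbor $y'\ne x$ of $y$, the tree $T_{(y',y)}$ is a neighbor $F$-tree of $y$ which is not a single vertex (i.e. not isomorphic to $P_1$). Then there exists a $(T,x)$-well 2-placement.
   Context: All graphs are finite, simple and undirected; $P_k$ is the path on $k$ vertices. A non-star tree is a tree not isomorphic to a star $K_{1,m}$ for any $m\ge0$. For an edge $ab$ of a tree $T$, $T_{(a,b)}$ denotes the connected component containing $a$ in $T-\{ab\}$; it is a neighbor $F$-tree of $b$ if it is a path with at most $3$ vertices and, when it has exactly $3$ vertices, $a$ is an end vertex of it. A permutation $\sigma$ of $V(T)$ is a 2-placement of $T$ if $\sigma(a)\sigma(b)\notin E(T)$ for every edge $ab\in E(T)$; $\sigma(T)\subseteq T^k$ means $dist_T(\sigma(a),\sigma(b))\le k$ for every edge $ab$ of $T$. A fixed-point-free permutation $\sigma$ of $V(T)$ is a $(T,x)$-well 2-placement if (distances and degrees in $T$): (1) $\sigma$ is a 2-placement of $T$; (2) $\sigma(T)\subseteq T^6$; (3) $dist(x,\sigma(x))\le 2$; (4) $dist(w,\sigma(w))\le 3$ for every neighbor $w$ of $x$; (5) $dist(w,\sigma(w))\le 4$ for every $w$ of degree $1$; (6) every cycle of $\sigma$ (in its disjoint cycle decomposition) has length at most $5$. *)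

theory Defs
  imports "HOL-Combinatorics.Permutations"
begin

definition simple_graph :: "'a set \<Rightarrow> ('a \<Rightarrow> 'a \<Rightarrow> bool) \<Rightarrow> bool" where
  "simple_graph V E \<longleftrightarrow> finite V \<and> (\<forall>u v. E u v \<longrightarrow> u \<in> V \<and> v \<in> V)
     \<and> (\<forall>u v. E u v \<longrightarrow> E v u) \<and> (\<forall>u. \<not> E u u)"

definition walk_from_to :: "('a \<Rightarrow> 'a \<Rightarrow> bool) \<Rightarrow> 'a \<Rightarrow> 'a \<Rightarrow> 'a list \<Rightarrow> bool" where
  "walk_from_to E u v xs \<longleftrightarrow> xs \<noteq> [] \<and> hd xs = u \<and> last xs = v \<and> successively E xs"

definition connected_graph :: "'a set \<Rightarrow> ('a \<Rightarrow> 'a \<Rightarrow> bool) \<Rightarrow> bool" where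
  "connected_graph V E \<longleftrightarrow> (\<forall>u\<in>V. \<forall>v\<in>V. \<exists>xs. walk_from_to E u v xs)"

definition acyclic_graph :: "('a \<Rightarrow> 'a \<Rightarrow> bool) \<Rightarrow> bool" where
  "acyclic_graph E \<longleftrightarrow> \<not> (\<exists>xs. length xs \<ge> 3 \<and> distinct xs \<and> successively E xs \<and> E (last xs) (hd xs))"

definition is_tree :: "'a set \<Rightarrow> ('a \<Rightarrow> 'a \<Rightarrow> bool) \<Rightarrow> bool" where
  "is_tree V E \<longleftrightarrow> simple_graph V E \<and> V \<noteq> {} \<and> connected_graph V E \<and> acyclic_graph E"

definition is_star :: "'a set \<Rightarrow> ('a \<Rightarrow> 'a \<Rightarrow> bool) \<Rightarrow> bool" where
  "is_star V E \<longleftrightarrow> (\<exists>c\<in>V. (\<forall>u\<in>V. u \<noteq> c \<longrightarrow> E c u) \<and> (\<forall>u v. E u v \<longrightarrow> u = c \<or> v = c))"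

definition deg :: "'a set \<Rightarrow> ('a \<Rightarrow> 'a \<Rightarrow> bool) \<Rightarrow> 'a \<Rightarrow> nat" where
  "deg V E u = card {v\<in>V. E u v}"

definition gdist :: "('a \<Rightarrow> 'a \<Rightarrow> bool) \<Rightarrow> 'a \<Rightarrow> 'a \<Rightarrow> nat" where
  "gdist E u v = (LEAST n. \<exists>xs. walk_from_to E u v xs \<and> length xs = Suc n)"

text \<open>T_(a,b): vertex set of the component containing a in T - {ab}.\<close>
definition comp_minus_edge :: "('a \<Rightarrow> 'a \<Rightarrow> bool) \<Rightarrow> 'a \<Rightarrow> 'a \<Rightarrow> 'a set" where
  "comp_minus_edge E a b =
     {v. \<exists>xs. walk_from_to (\<lambda>p q. E p q \<and> {p, q} \<noteq> {a, b}) a v xs}"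

definition induced_path :: "('a \<Rightarrow> 'a \<Rightarrow> bool) \<Rightarrow> 'a set \<Rightarrow> 'a list \<Rightarrow> bool" where
  "induced_path E C xs \<longleftrightarrow> set xs = C \<and> distinct xs \<and>
     (\<forall>u\<in>C. \<forall>v\<in>C. E u v \<longleftrightarrow> (\<exists>i. Suc i < length xs \<and> {xs ! i, xs ! Suc i} = {u, v}))"

definition nbr_F_tree :: "('a \<Rightarrow> 'a \<Rightarrow> bool) \<Rightarrow> 'a \<Rightarrow> 'a \<Rightarrow> bool" where
  "nbr_F_tree E a b \<longleftrightarrow> E a b \<and>
     (let C = comp_minus_edge E a b in
        \<exists>xs. induced_path E C xs \<and> length xs \<le> 3 \<and>
             (length xs = 3 \<longrightarrow> (a = hd xs \<or> a = last xs)))"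

definition cycle_len :: "('a \<Rightarrow> 'a) \<Rightarrow> 'a \<Rightarrow> nat" where
  "cycle_len s v = (LEAST k. k > 0 \<and> (s ^^ k) v = v)"

definition two_placement :: "('a \<Rightarrow> 'a \<Rightarrow> bool) \<Rightarrow> ('a \<Rightarrow> 'a) \<Rightarrow> bool" where
  "two_placement E s \<longleftrightarrow> (\<forall>a b. E a b \<longrightarrow> \<not> E (s a) (s b))"

definition well_2_placement :: "'a set \<Rightarrow> ('a \<Rightarrow> 'a \<Rightarrow> bool) \<Rightarrow> 'a \<Rightarrow> ('a \<Rightarrow> 'a) \<Rightarrow> bool" where
  "well_2_placement V E x s \<longleftrightarrow>
     s permutes V \<and> (\<forall>v\<in>V. s v \<noteq> v) \<and>
     two_placement E s \<and>
     (\<forall>a b. E a b \<longrightarrow> gdist E (s a) (s b) \<le> 6) \<and>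
     gdist E x (s x) \<le> 2 \<and>
     (\<forall>w. E x w \<longrightarrow> gdist E w (s w) \<le> 3) \<and>
     (\<forall>w\<in>V. deg V E w = 1 \<longrightarrow> gdist E w (s w) \<le> 4) \<and>
     (\<forall>v\<in>V. cycle_len s v \<le> 5)"

end

theory Submission
  imports Defs
begin


datatype 'b crd = X | Y | B 'b nat

fun Ec :: "'b crd \<Rightarrow> 'b crd \<Rightarrow> bool" where
  "Ec X Y = True"
| "Ec Y X = True"
| "Ec Y (B a j) = (j = 0)"
| "Ec (B a j) Y = (j = 0)"
| "Ec (B a i) (B b j) = (a = b \<and> (i = Suc j \<or> j = Suc i))"
| "Ec _ _ = False"

definition cset :: "('a \<Rightarrow> 'a) \<Rightarrow> ('a \<Rightarrow> 'a) \<Rightarrow> ('a \<Rightarrow> bool) \<Rightarrow> 'a \<Rightarrow> 'a set" where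
  "cset bb cc lg a = (if lg a then {a, bb a, cc a} else {a, bb a})"

locale struct =
  fixes V :: "'a set" and E :: "'a \<Rightarrow> 'a \<Rightarrow> bool" and x y :: 'a and A :: "'a set"
    and bb cc :: "'a \<Rightarrow> 'a" and lg :: "'a \<Rightarrow> bool" and p :: "'a \<Rightarrow> 'a" and a0 :: 'a and od :: bool
  assumes sg: "simple_graph V E"
  and Exy: "E x y"
  and xnb: "\<And>v. E x v \<Longrightarrow> v = y"
  and Adef: "\<And>a. E y a \<longleftrightarrow> (a = x \<or> a \<in> A)"
  and xA: "x \<notin> A"
  and cover: "\<And>v. v \<in> V \<Longrightarrow> v = x \<or> v = y \<or> (\<exists>a\<in>A. v \<in> cset bb cc lg a)"
  and dist1: "\<And>a. a \<in> A \<Longrightarrow> bb a \<noteq> a \<and> bb a \<noteq> x \<and> bb a \<noteq> y"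
  and dist2: "\<And>a. a \<in> A \<Longrightarrow> lg a \<Longrightarrow> cc a \<noteq> a \<and> cc a \<noteq> bb a \<and> cc a \<noteq> x \<and> cc a \<noteq> y"
  and disj: "\<And>a a' u. a \<in> A \<Longrightarrow> a' \<in> A \<Longrightarrow> a \<noteq> a' \<Longrightarrow> u \<in> cset bb cc lg a \<Longrightarrow> u \<notin> cset bb cc lg a'"
  and Eab: "\<And>a. a \<in> A \<Longrightarrow> E a (bb a)"
  and Ebc: "\<And>a. a \<in> A \<Longrightarrow> lg a \<Longrightarrow> E (bb a) (cc a)"
  and nEac: "\<And>a. a \<in> A \<Longrightarrow> lg a \<Longrightarrow> \<not> E a (cc a)"
  and clos: "\<And>a u w. a \<in> A \<Longrightarrow> u \<in> cset bb cc lg a \<Longrightarrow> E u w \<Longrightarrow> w \<in> cset bb cc lg a \<or> (u = a \<and> w = y)"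
  and pA: "\<And>a. a \<in> A \<Longrightarrow> p a \<in> A"
  and pp: "\<And>a. a \<in> A \<Longrightarrow> p (p a) = a"
  and a0A: "a0 \<in> A"
  and od1: "od \<Longrightarrow> p a0 = a0"
  and od2: "\<not> od \<Longrightarrow> p a0 \<noteq> a0"
  and pfix: "\<And>a. a \<in> A \<Longrightarrow> p a = a \<Longrightarrow> od \<and> a = a0"
begin

lemma Esym: "E u v \<Longrightarrow> E v u" using sg unfolding simple_graph_def by blast
lemma Esym_iff: "E u v = E v u" using Esym by blast
lemma Eirr: "\<not> E u u" using sg unfolding simple_graph_def by blast
lemma EV: "E u v \<Longrightarrow> u \<in> V \<and> v \<in> V" using sg unfolding simple_graph_def by blast
lemma finV: "finite V" using sg unfolding simple_graph_def by blast
lemma xy: "x \<noteq> y" using Exy Eirr by metis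
lemma Ay: "a \<in> A \<Longrightarrow> a \<noteq> y" using Adef Eirr by metis
lemma Ax: "a \<in> A \<Longrightarrow> a \<noteq> x" using xA by metis
lemma Eya: "a \<in> A \<Longrightarrow> E y a" using Adef by metis
lemma inc: "a \<in> A \<Longrightarrow> a \<in> cset bb cc lg a \<and> bb a \<in> cset bb cc lg a \<and> (lg a \<longrightarrow> cc a \<in> cset bb cc lg a)"
  unfolding cset_def by auto
lemma bbA: "a \<in> A \<Longrightarrow> bb a \<notin> A"
  using disj[of a "bb a" "bb a"] inc dist1 by metis
lemma ccA: "a \<in> A \<Longrightarrow> lg a \<Longrightarrow> cc a \<notin> A"
  using disj[of a "cc a" "cc a"] inc dist2 by metis

definition len :: "'a \<Rightarrow> nat" where "len a = (if lg a then 3 else 2)"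

definition valid :: "'a crd \<Rightarrow> bool" where
  "valid c = (case c of X \<Rightarrow> True | Y \<Rightarrow> True | B a j \<Rightarrow> a \<in> A \<and> j < len a)"

definition emb :: "'a crd \<Rightarrow> 'a" where
  "emb c = (case c of X \<Rightarrow> x | Y \<Rightarrow> y | B a j \<Rightarrow> if j = 0 then a else if j = 1 then bb a else cc a)"

lemma valid_simps[simp]: "valid X" "valid Y" "valid (B a j) \<longleftrightarrow> a \<in> A \<and> (j = 0 \<or> j = 1 \<or> (lg a \<and> j = 2))"
  unfolding valid_def len_def by auto

lemma emb_simps[simp]: "emb X = x" "emb Y = y" "emb (B a 0) = a" "emb (B a (Suc 0)) = bb a"
  "emb (B a 2) = cc a"
  unfolding emb_def by auto

lemma embB_in: "valid (B a j) \<Longrightarrow> emb (B a j) \<in> cset bb cc lg a"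
  using inc by (auto simp: emb_def)

lemma embB_ne: "valid (B a j) \<Longrightarrow> emb (B a j) \<noteq> x \<and> emb (B a j) \<noteq> y"
  using dist1 dist2 Ax Ay by (auto simp: emb_def)

lemma emb_inj: "valid c \<Longrightarrow> valid d \<Longrightarrow> emb c = emb d \<Longrightarrow> c = d"
proof (cases c; cases d)
  fix a i b j assume c: "c = B a i" and d: "d = B b j" and v: "valid c" "valid d" and e: "emb c = emb d"
  have "a = b"
  proof (rule ccontr)
    assume "a \<noteq> b"
    moreover have "emb c \<in> cset bb cc lg a" using embB_in v c by auto
    moreover have "emb c \<in> cset bb cc lg b" using embB_in v e d by auto
    ultimately show False using disj[of a b "emb c"] v c d by auto
  qed
  moreover have vi: "a \<in> A" "i = 0 \<or> i = Suc 0 \<or> (lg a \<and> i = 2)" using v c by auto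
  moreover have vj: "j = 0 \<or> j = Suc 0 \<or> (lg b \<and> j = 2)" using v d by auto
  ultimately show "c = d" using e c d dist1[of a] dist2[of a]
    by (elim disjE conjE) (auto simp del: One_nat_def)
next
  fix a i assume c: "c = X" and d: "d = B a i" and v: "valid c" "valid d" and e: "emb c = emb d"
  then show "c = d" using embB_ne[of a i] by simp
next
  fix a i assume c: "c = Y" and d: "d = B a i" and v: "valid c" "valid d" and e: "emb c = emb d"
  then show "c = d" using embB_ne[of a i] by simp
next
  fix a i assume c: "c = B a i" and d: "d = X" and v: "valid c" "valid d" and e: "emb c = emb d"
  then show "c = d" using embB_ne[of a i] by simp
next
  fix a i assume c: "c = B a i" and d: "d = Y" and v: "valid c" "valid d" and e: "emb c = emb d"
  then show "c = d" using embB_ne[of a i] by simp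
qed (use xy in auto)

lemma emb_V: "valid c \<Longrightarrow> emb c \<in> V"
  using EV[OF Exy] EV[OF Eab] EV[OF Ebc] by (cases c) (auto simp: emb_def)

lemma emb_surj: "v \<in> V \<Longrightarrow> \<exists>c. valid c \<and> emb c = v"
proof -
  assume "v \<in> V"
  then consider "v = x" | "v = y" | a where "a \<in> A" "v \<in> cset bb cc lg a" using cover by blast
  then show ?thesis
  proof cases
    case 1 then show ?thesis by (intro exI[of _ X]) auto
  next
    case 2 then show ?thesis by (intro exI[of _ Y]) auto
  next
    case 3
    then consider "v = a" | "v = bb a" | "lg a" "v = cc a" unfolding cset_def by (auto split: if_splits)
    then show ?thesis
    proof cases
      case 1 then show ?thesis using 3 by (intro exI[of _ "B a 0"]) auto
    next
      case 2 then show ?thesis using 3 by (intro exI[of _ "B a 1"]) auto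
    next
      case 3 then show ?thesis using \<open>a \<in> A\<close> by (intro exI[of _ "B a 2"]) auto
    qed
  qed
qed

lemma nExv: "v \<noteq> y \<Longrightarrow> \<not> E x v" using xnb by blast
lemma nEvx: "v \<noteq> y \<Longrightarrow> \<not> E v x" using xnb Esym by blast

lemma emb_E: "valid c \<Longrightarrow> valid d \<Longrightarrow> E (emb c) (emb d) = Ec c d"
proof (cases c; cases d)
  fix a i b j assume c: "c = B a i" and d: "d = B b j" and v: "valid c" "valid d"
  show "E (emb c) (emb d) = Ec c d"
  proof (cases "a = b")
    case False
    have "\<not> E (emb c) (emb d)"
    proof
      assume ee: "E (emb c) (emb d)"
      have "emb c \<in> cset bb cc lg a" using embB_in v c by auto
      from clos[OF _ this ee] v c d embB_ne[of b j] have "emb d \<in> cset bb cc lg a" by auto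
      then show False using disj[of b a "emb d"] embB_in v d c False by auto
    qed
    then show ?thesis using False c d by simp
  next
    case True
    moreover have vi: "a \<in> A" "i = 0 \<or> i = Suc 0 \<or> (lg a \<and> i = 2)" using v c by auto
    moreover have vj: "j = 0 \<or> j = Suc 0 \<or> (lg b \<and> j = 2)" using v d by auto
    ultimately show ?thesis using c d Eab[of a] Ebc[of a] nEac[of a] Eirr Esym[OF Eab[of a]] Esym[OF Ebc[of a]] Esym[of "cc a" a]
      by (elim disjE conjE) (auto simp del: One_nat_def)
  qed
next
  fix a i assume c: "c = B a i" and d: "d = Y" and v: "valid c" "valid d"
  show "E (emb c) (emb d) = Ec c d"
  proof (cases "i = 0")
    case True then show ?thesis using c d v Eya Esym_iff by auto
  next
    case False
    then have "emb c \<notin> A" using bbA ccA v c by (auto simp: emb_def)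
    moreover have "emb c \<noteq> x" using embB_ne v c by auto
    ultimately show ?thesis using c d False Adef Esym_iff[of _ y] by auto
  qed
next
  fix a i assume c: "c = Y" and d: "d = B a i" and v: "valid c" "valid d"
  show "E (emb c) (emb d) = Ec c d"
  proof (cases "i = 0")
    case True then show ?thesis using c d v Eya Esym_iff by auto
  next
    case False
    then have "emb d \<notin> A" using bbA ccA v d by (auto simp: emb_def)
    moreover have "emb d \<noteq> x" using embB_ne v d by auto
    ultimately show ?thesis using c d False Adef Esym_iff[of _ y] by auto
  qed
next
  fix a i assume c: "c = X" and d: "d = B a i" and v: "valid c" "valid d"
  have "emb d \<noteq> y" using embB_ne v d by blast
  then show "E (emb c) (emb d) = Ec c d" using c d nExv by simp
next
  fix a i assume c: "c = B a i" and d: "d = X" and v: "valid c" "valid d"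
  have "emb c \<noteq> y" using embB_ne v c by blast
  then show "E (emb c) (emb d) = Ec c d" using c d nEvx by simp
next
  assume "c = X" "d = X" then show "E (emb c) (emb d) = Ec c d" by (simp add: Eirr)
next
  assume "c = Y" "d = Y" then show "E (emb c) (emb d) = Ec c d" by (simp add: Eirr)
next
  assume "c = X" "d = Y" then show "E (emb c) (emb d) = Ec c d" by (simp add: Exy)
next
  assume "c = Y" "d = X" then show "E (emb c) (emb d) = Ec c d" using Esym[OF Exy] by simp
qed

definition prd :: "'a \<Rightarrow> bool" where "prd a \<longleftrightarrow> a \<in> A \<and> a \<noteq> a0 \<and> (od \<or> a \<noteq> p a0)"

lemma prd_p: "prd a \<Longrightarrow> prd (p a) \<and> p a \<noteq> a \<and> p (p a) = a"
  unfolding prd_def using pA pp pfix od1 a0A by metis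

lemma nod: "\<not> od \<Longrightarrow> p a0 \<in> A \<and> p a0 \<noteq> a0 \<and> p (p a0) = a0"
  using pA pp od2 a0A by metis

lemma groups: "a \<in> A \<Longrightarrow> a = a0 \<or> (\<not> od \<and> a = p a0) \<or> prd a"
  unfolding prd_def by blast

definition sc :: "'a crd \<Rightarrow> 'a crd" where
  "sc c = (case c of X \<Rightarrow> B a0 0
    | Y \<Rightarrow> (if od then X else B (p a0) 1)
    | B a j \<Rightarrow> (if a = a0 then
         (if od then (if j = 0 then B a0 (if lg a0 then 2 else 1) else if j = 1 then Y else B a0 1)
          else (if j = 0 then X else if j = 1 then B (p a0) 0 else B a0 1))
       else if \<not> od \<and> a = p a0 then
         (if j = 0 then B a0 (if lg a0 then 2 else 1) else if j = 1 then (if lg a then B a 2 else Y) else Y)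
       else (if j = 0 then B (p a) 1 else if j = 1 then (if lg a then B a 2 else B a 0)
             else (if lg (p a) then B (p a) 0 else B a 0))))"

lemma sc_X[simp]: "sc X = B a0 0" unfolding sc_def by simp
lemma sc_Y[simp]: "sc Y = (if od then X else B (p a0) 1)" unfolding sc_def by simp
lemma sc_a0: "sc (B a0 j) = (if od then (if j = 0 then B a0 (if lg a0 then 2 else 1) else if j = 1 then Y else B a0 1)
          else (if j = 0 then X else if j = 1 then B (p a0) 0 else B a0 1))" unfolding sc_def by simp
lemma sc_a1: "\<not> od \<Longrightarrow> sc (B (p a0) j) = (if j = 0 then B a0 (if lg a0 then 2 else 1) else if j = 1 then (if lg (p a0) then B (p a0) 2 else Y) else Y)"
  unfolding sc_def using nod by simp
lemma sc_pr: "prd a \<Longrightarrow> sc (B a j) = (if j = 0 then B (p a) 1 else if j = 1 then (if lg a then B a 2 else B a 0)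
             else (if lg (p a) then B (p a) 0 else B a 0))"
  unfolding sc_def prd_def by auto

lemma validB: "valid (B a j) \<Longrightarrow> a \<in> A \<and> (j = 0 \<or> j = 1 \<or> (lg a \<and> j = 2))" by simp

lemma sc_valid: "valid c \<Longrightarrow> valid (sc c)"
proof (cases c)
  case (B a j)
  assume v: "valid c"
  then have aA: "a \<in> A" and j: "j = 0 \<or> j = 1 \<or> (lg a \<and> j = 2)" using B by auto
  from groups[OF aA] show ?thesis
  proof (elim disjE)
    assume "a = a0" then show ?thesis using B j a0A nod by (auto simp: sc_a0)
  next
    assume h: "\<not> od \<and> a = p a0" then show ?thesis using B j a0A nod sc_a1[OF conjunct1[OF h]] sc_Y sc_X by auto
  next
    assume "prd a" then show ?thesis using B j prd_p[of a] by (auto simp: sc_pr prd_def)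
  qed
qed (use a0A nod in auto)

lemma sc_nfix: "valid c \<Longrightarrow> sc c \<noteq> c"
proof (cases c)
  case (B a j)
  assume v: "valid c"
  then have aA: "a \<in> A" and j: "j = 0 \<or> j = 1 \<or> (lg a \<and> j = 2)" using B by auto
  from groups[OF aA] show ?thesis
  proof (elim disjE)
    assume "a = a0" then show ?thesis using B j a0A nod by (auto simp: sc_a0)
  next
    assume h: "\<not> od \<and> a = p a0" then show ?thesis using B j a0A nod sc_a1[OF conjunct1[OF h]] sc_Y sc_X by auto
  next
    assume "prd a" then show ?thesis using B j prd_p[of a] by (auto simp: sc_pr)
  qed
qed (use a0A nod in auto)

lemma Ec_sym: "Ec c d = Ec d c" by (cases c; cases d) auto

lemma sc_edge_Y: "a \<in> A \<Longrightarrow> \<not> Ec (sc Y) (sc (B a 0))"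
proof -
  assume aA: "a \<in> A"
  from groups[OF aA] show ?thesis
  proof (elim disjE)
    assume "a = a0" then show ?thesis using a0A nod by (auto simp: sc_a0)
  next
    assume h: "\<not> od \<and> a = p a0" then show ?thesis using a0A nod sc_a1[OF conjunct1[OF h]] sc_Y sc_X by auto
  next
    assume "prd a" then show ?thesis using prd_p[of a] by (auto simp: sc_pr prd_def)
  qed
qed

lemma sc_edge_B: "valid (B a (Suc i)) \<Longrightarrow> \<not> Ec (sc (B a i)) (sc (B a (Suc i)))"
proof -
  assume v: "valid (B a (Suc i))"
  then have aA: "a \<in> A" and j: "i = 0 \<or> (lg a \<and> i = 1)" by auto
  from groups[OF aA] show ?thesis
  proof (elim disjE)
    assume "a = a0" then show ?thesis using j a0A nod by (auto simp: sc_a0)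
  next
    assume h: "\<not> od \<and> a = p a0" then show ?thesis using j a0A nod sc_a1[OF conjunct1[OF h]] sc_Y sc_X by auto
  next
    assume "prd a" then show ?thesis using j prd_p[of a] by (auto simp: sc_pr)
  qed
qed

lemma sc_edge: "valid c \<Longrightarrow> valid d \<Longrightarrow> Ec c d \<Longrightarrow> \<not> Ec (sc c) (sc d)"
proof (cases c; cases d)
  fix a i b j assume c: "c = B a i" and d: "d = B b j" and v: "valid c" "valid d" and e: "Ec c d"
  then have ab: "a = b" and "i = Suc j \<or> j = Suc i" by auto
  then show ?thesis using sc_edge_B[of a i] sc_edge_B[of a j] v c d Ec_sym by auto
next
  fix a i assume c: "c = B a i" and d: "d = Y" and v: "valid c" "valid d" and e: "Ec c d"
  then show ?thesis using sc_edge_Y[of a] Ec_sym[of "sc c" "sc d"] by auto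
next
  fix a i assume c: "c = Y" and d: "d = B a i" and v: "valid c" "valid d" and e: "Ec c d"
  then show ?thesis using sc_edge_Y[of a] Ec_sym[of "sc c" "sc d"] by auto
qed (use nod in auto)

lemma fp: "(f^^2) c = f (f c)" "(f^^3) c = f (f (f c))" "(f^^4) c = f (f (f (f c)))"
  "(f^^5) c = f (f (f (f (f c))))"
  by (simp_all add: numeral_eq_Suc)

lemma sc_cyc: "valid c \<Longrightarrow> (sc^^2) c = c \<or> (sc^^3) c = c \<or> (sc^^4) c = c \<or> (sc^^5) c = c"
proof (cases c)
  case (B a j)
  assume v: "valid c"
  then have aA: "a \<in> A" and j: "j = 0 \<or> j = 1 \<or> (lg a \<and> j = 2)" using B by auto
  from groups[OF aA] show ?thesis
  proof (elim disjE)
    assume h: "a = a0" show ?thesis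
    proof (cases od)
      case True then show ?thesis using h B j a0A od1 sc_a0 sc_X sc_Y by (auto simp: fp)
    next
      case False then show ?thesis using h B j a0A nod sc_a1[OF False] sc_a0 sc_X sc_Y by (auto simp: fp)
    qed
  next
    assume h: "\<not> od \<and> a = p a0" then show ?thesis using B j a0A nod sc_a1[OF conjunct1[OF h]] sc_a0 sc_Y sc_X by (auto simp: fp)
  next
    assume "prd a" then show ?thesis using B j prd_p[of a] by (auto simp: sc_pr fp)
  qed
next
  case X
  then show ?thesis
  proof (cases od)
    case True then show ?thesis using X a0A od1 sc_a0 sc_X sc_Y by (auto simp: fp)
  next
    case False then show ?thesis using X a0A nod sc_a1[OF False] sc_a0 sc_X sc_Y by (auto simp: fp)
  qed
next
  case Y
  then show ?thesis
  proof (cases od)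
    case True then show ?thesis using Y a0A od1 sc_a0 sc_X sc_Y by (auto simp: fp)
  next
    case False then show ?thesis using Y a0A nod sc_a1[OF False] sc_a0 sc_X sc_Y by (auto simp: fp)
  qed
qed

definition depth :: "'a crd \<Rightarrow> nat" where
  "depth c = (case c of X \<Rightarrow> 1 | Y \<Rightarrow> 0 | B a j \<Rightarrow> Suc j)"

definition up :: "'a crd \<Rightarrow> 'a list" where
  "up c = (case c of X \<Rightarrow> [x, y] | Y \<Rightarrow> [y] | B a j \<Rightarrow>
     (if j = 0 then [a, y] else if j = 1 then [bb a, a, y] else [cc a, bb a, a, y]))"

lemma walk_up: "valid c \<Longrightarrow> walk_from_to E (emb c) y (up c) \<and> length (up c) = Suc (depth c)"
proof (cases c)
  case (B a j)
  assume v: "valid c"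
  then have aA: "a \<in> A" and j: "j = 0 \<or> j = 1 \<or> (lg a \<and> j = 2)" using B by auto
  have e1: "E a y" using Esym[OF Eya[OF aA]] .
  have e2: "E (bb a) a" using Esym[OF Eab[OF aA]] .
  show ?thesis using j
  proof (elim disjE conjE)
    assume "j = 0" then show ?thesis using B e1 by (simp add: walk_from_to_def up_def depth_def)
  next
    assume "j = 1" then show ?thesis using B e1 e2 by (simp add: walk_from_to_def up_def depth_def)
  next
    assume "lg a" "j = 2" then show ?thesis using B e1 e2 Esym[OF Ebc[OF aA]]
      by (simp add: walk_from_to_def up_def depth_def)
  qed
qed (auto simp: walk_from_to_def up_def depth_def Exy)

lemma gdist_le: "walk_from_to E u v xs \<Longrightarrow> gdist E u v \<le> length xs - 1"
  unfolding gdist_def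
  by (rule Least_le) (auto simp: walk_from_to_def)

lemma walk_rev: "walk_from_to E u v xs \<Longrightarrow> walk_from_to E v u (rev xs)"
  unfolding walk_from_to_def
  by (auto simp: hd_rev last_rev Esym_iff)

lemma walk_join: "walk_from_to E u v xs \<Longrightarrow> walk_from_to E v w ys \<Longrightarrow> walk_from_to E u w (xs @ tl ys)"
  unfolding walk_from_to_def
  apply (cases ys; cases "tl ys")
     apply (auto simp: successively_append_iff)
  done

lemma dist_depth: "valid c \<Longrightarrow> valid d \<Longrightarrow> gdist E (emb c) (emb d) \<le> depth c + depth d"
proof -
  assume v: "valid c" "valid d"
  have w: "walk_from_to E (emb c) (emb d) (up c @ tl (rev (up d)))"
    using walk_join[OF conjunct1[OF walk_up[OF v(1)]] walk_rev[OF conjunct1[OF walk_up[OF v(2)]]]] .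
  have "length (up c @ tl (rev (up d))) = Suc (depth c + depth d)"
    using walk_up[OF v(1)] walk_up[OF v(2)] by simp
  then show ?thesis using gdist_le[OF w] by simp
qed

lemma dist_adj: "E u v \<Longrightarrow> gdist E u v \<le> 1"
  using gdist_le[of u v "[u, v]"] by (simp add: walk_from_to_def)

lemma depth3: "valid c \<Longrightarrow> depth c \<le> 3"
  by (cases c) (auto simp: depth_def)

lemma sc_near: "valid c \<Longrightarrow> depth c + depth (sc c) \<le> 4 \<or> Ec c (sc c)"
proof (cases c)
  case (B a j)
  assume v: "valid c"
  then have aA: "a \<in> A" and j: "j = 0 \<or> j = 1 \<or> (lg a \<and> j = 2)" using B by auto
  from groups[OF aA] show ?thesis
  proof (elim disjE)
    assume "a = a0" then show ?thesis using B j a0A nod by (auto simp: sc_a0 depth_def)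
  next
    assume h: "\<not> od \<and> a = p a0" then show ?thesis using B j a0A nod sc_a1[OF conjunct1[OF h]] sc_Y sc_X by (auto simp: depth_def)
  next
    assume "prd a" then show ?thesis using B j prd_p[of a] by (auto simp: sc_pr depth_def)
  qed
qed (auto simp: depth_def)

lemma sc_dist: "valid c \<Longrightarrow> gdist E (emb c) (emb (sc c)) \<le> 4"
proof -
  assume v: "valid c"
  from sc_near[OF v] show ?thesis
  proof
    assume "depth c + depth (sc c) \<le> 4"
    then show ?thesis using dist_depth[OF v sc_valid[OF v]] by linarith
  next
    assume "Ec c (sc c)"
    then have "E (emb c) (emb (sc c))" using emb_E[OF v sc_valid[OF v]] by simp
    then show ?thesis using dist_adj by (meson le_trans numeral_le_one_iff one_le_numeral)
  qed
qed

definition crd :: "'a \<Rightarrow> 'a crd" where "crd v = (SOME c. valid c \<and> emb c = v)"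

lemma crd: "v \<in> V \<Longrightarrow> valid (crd v) \<and> emb (crd v) = v"
  unfolding crd_def by (rule someI_ex[OF emb_surj])

lemma crd_emb: "valid c \<Longrightarrow> crd (emb c) = c"
  using crd[OF emb_V] emb_inj by (metis emb_V)

definition s :: "'a \<Rightarrow> 'a" where "s v = (if v \<in> V then emb (sc (crd v)) else v)"

lemma s_emb: "valid c \<Longrightarrow> s (emb c) = emb (sc c)"
  unfolding s_def using emb_V crd_emb by simp

lemma sc_pow_valid: "valid c \<Longrightarrow> valid ((sc^^k) c)"
  by (induction k) (auto simp: sc_valid)

lemma s_pow: "valid c \<Longrightarrow> (s^^k) (emb c) = emb ((sc^^k) c)"
  by (induction k) (auto simp: s_emb sc_pow_valid)

lemma s_cyc: "valid c \<Longrightarrow> \<exists>k. 0 < k \<and> k \<le> 5 \<and> (s^^k) (emb c) = emb c"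
proof -
  assume v: "valid c"
  have "\<exists>k\<in>{2,3,4,5::nat}. (sc^^k) c = c" using sc_cyc[OF v] by auto
  then obtain k where k: "k \<in> {2,3,4,5::nat}" "(sc^^k) c = c" by blast
  then have "(s^^k) (emb c) = emb c" using s_pow[OF v] by simp
  moreover have "0 < k \<and> k \<le> 5" using k(1) by auto
  ultimately show ?thesis by blast
qed

lemma s_img: "s ` V = V"
proof
  show "s ` V \<subseteq> V" using crd emb_V sc_valid s_emb by (metis image_subsetI)
next
  show "V \<subseteq> s ` V"
  proof
    fix v assume "v \<in> V"
    then obtain c where c: "valid c" "emb c = v" using emb_surj by blast
    then obtain k where k: "0 < k" "(s^^k) v = v" using s_cyc by blast
    then obtain m where m: "k = Suc m" using gr0_implies_Suc by blast
    have "(s^^m) v = emb ((sc^^m) c)" using s_pow c by blast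
    then have "(s^^m) v \<in> V" using emb_V sc_pow_valid c by simp
    moreover have "s ((s^^m) v) = v" using k m by (metis comp_apply funpow.simps(2))
    ultimately show "v \<in> s ` V" by (metis image_eqI)
  qed
qed

lemma s_perm: "s permutes V"
proof (rule bij_imp_permutes)
  show "bij_betw s V V" unfolding bij_betw_def using s_img eq_card_imp_inj_on[OF finV, of s] by simp
next
  fix v assume "v \<notin> V" then show "s v = v" unfolding s_def by simp
qed

lemma well: "well_2_placement V E x s"
  unfolding well_2_placement_def
proof (intro conjI ballI allI impI)
  show "s permutes V" by (rule s_perm)
next
  fix v assume "v \<in> V"
  then obtain c where c: "valid c" "emb c = v" using emb_surj by blast
  then show "s v \<noteq> v" using s_emb sc_nfix emb_inj sc_valid by metis
next
  show "two_placement E s" unfolding two_placement_def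
  proof (intro allI impI)
    fix u v assume e: "E u v"
    then obtain c d where c: "valid c" "emb c = u" and d: "valid d" "emb d = v" using emb_surj EV by metis
    then have "Ec c d" using emb_E e by metis
    then have "\<not> Ec (sc c) (sc d)" using sc_edge c d by blast
    then show "\<not> E (s u) (s v)" using c d s_emb emb_E sc_valid by metis
  qed
next
  fix u v assume e: "E u v"
  then obtain c d where c: "valid c" "emb c = u" and d: "valid d" "emb d = v" using emb_surj EV by metis
  have "gdist E (emb (sc c)) (emb (sc d)) \<le> depth (sc c) + depth (sc d)"
    using dist_depth sc_valid c d by blast
  also have "\<dots> \<le> 6" using depth3 sc_valid c d by (metis add_mono numeral_Bit0 numeral_Bit1 numeral_One one_plus_numeral)
  finally show "gdist E (s u) (s v) \<le> 6" using c d s_emb by metis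
next
  have "gdist E (emb X) (emb (sc X)) \<le> depth X + depth (sc X)" using dist_depth[of X "sc X"] sc_valid[of X] by simp
  then show "gdist E x (s x) \<le> 2" using s_emb[of X] by (simp add: depth_def)
next
  fix w assume "E x w"
  then have "w = y" using xnb by blast
  have "gdist E (emb Y) (emb (sc Y)) \<le> depth Y + depth (sc Y)" using dist_depth[of Y "sc Y"] sc_valid[of Y] by simp
  then show "gdist E w (s w) \<le> 3" using s_emb[of Y] \<open>w = y\<close> by (auto simp: depth_def split: if_splits)
next
  fix w assume "w \<in> V" "deg V E w = 1"
  then obtain c where c: "valid c" "emb c = w" using emb_surj by blast
  then show "gdist E w (s w) \<le> 4" using sc_dist s_emb by metis
next
  fix v assume "v \<in> V"
  then obtain c where c: "valid c" "emb c = v" using emb_surj by blast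
  then obtain k where k: "0 < k" "k \<le> 5" "(s^^k) v = v" using s_cyc by blast
  have "cycle_len s v \<le> k" unfolding cycle_len_def by (rule Least_le) (use k in simp)
  then show "cycle_len s v \<le> 5" using k by simp
qed

end



lemma pairing: "finite A \<Longrightarrow> \<exists>p. (\<forall>a\<in>A. p a \<in> A \<and> p (p a) = a) \<and> (\<forall>a\<in>A. \<forall>b\<in>A. p a = a \<and> p b = b \<longrightarrow> a = b)"
proof (induction A rule: finite_induct)
  case empty then show ?case by auto
next
  case (insert z F)
  then obtain p where p1: "\<forall>a\<in>F. p a \<in> F \<and> p (p a) = a" and p2: "\<forall>a\<in>F. \<forall>b\<in>F. p a = a \<and> p b = b \<longrightarrow> a = b" by blast
  show ?case
  proof (cases "\<exists>f\<in>F. p f = f")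
    case True
    then obtain f where f: "f \<in> F" "p f = f" by blast
    have zf: "z \<noteq> f" using insert f by auto
    define q where "q = p(z := f, f := z)"
    have "\<forall>a\<in>F. a \<noteq> f \<longrightarrow> p a \<noteq> f" using p1 f by metis
    then have "\<forall>a\<in>insert z F. q a \<in> insert z F \<and> q (q a) = a"
      using p1 f zf insert(2) unfolding q_def by auto
    moreover have "\<forall>a\<in>insert z F. q a \<noteq> a"
      using p2 f zf insert(2) unfolding q_def by auto
    ultimately show ?thesis by blast
  next
    case False
    define q where "q = p(z := z)"
    have "\<forall>a\<in>insert z F. q a \<in> insert z F \<and> q (q a) = a"
      using p1 insert(2) unfolding q_def by auto
    moreover have "\<forall>a\<in>insert z F. \<forall>b\<in>insert z F. q a = a \<and> q b = b \<longrightarrow> a = b"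
      using False insert(2) unfolding q_def by auto
    ultimately show ?thesis by blast
  qed
qed

lemma walk_closed: "walk_from_to R u v xs \<Longrightarrow> u \<in> S \<Longrightarrow> (\<forall>a b. a \<in> S \<longrightarrow> R a b \<longrightarrow> b \<in> S) \<Longrightarrow> v \<in> S"
proof -
  have "\<And>u. successively R xs \<Longrightarrow> xs \<noteq> [] \<Longrightarrow> hd xs = u \<Longrightarrow> u \<in> S \<Longrightarrow> (\<forall>a b. a \<in> S \<longrightarrow> R a b \<longrightarrow> b \<in> S) \<Longrightarrow> last xs \<in> S"
  proof (induction xs)
    case Nil then show ?case by simp
  next
    case (Cons z zs)
    show ?case
    proof (cases zs)
      case Nil then show ?thesis using Cons by simp
    next
      case (Cons w ws)
      then have "R z w" "successively R zs" using Cons.prems(1) by auto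
      then show ?thesis using Cons.IH[of w] Cons.prems \<open>zs = w # ws\<close> by auto
    qed
  qed
  then show "walk_from_to R u v xs \<Longrightarrow> u \<in> S \<Longrightarrow> (\<forall>a b. a \<in> S \<longrightarrow> R a b \<longrightarrow> b \<in> S) \<Longrightarrow> v \<in> S"
    unfolding walk_from_to_def by blast
qed

lemma walk_snoc: "walk_from_to R u v xs \<Longrightarrow> R v w \<Longrightarrow> walk_from_to R u w (xs @ [w])"
  unfolding walk_from_to_def by (auto simp: successively_append_iff)

locale orig =
  fixes V :: "'a set" and E :: "'a \<Rightarrow> 'a \<Rightarrow> bool" and x y :: 'a
  assumes tree: "is_tree V E"
    and Exy: "E x y"
    and degx: "deg V E x = 1"
    and degy: "deg V E y \<ge> 3"
    and br: "\<forall>y'. E y y' \<and> y' \<noteq> x \<longrightarrow>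
           nbr_F_tree E y' y \<and> card (comp_minus_edge E y' y) \<noteq> 1"
begin

lemma sg: "simple_graph V E" using tree unfolding is_tree_def by blast
lemma conn: "connected_graph V E" using tree unfolding is_tree_def by blast
lemma Esym: "E u v \<Longrightarrow> E v u" using sg unfolding simple_graph_def by blast
lemma Eirr: "\<not> E u u" using sg unfolding simple_graph_def by blast
lemma EV: "E u v \<Longrightarrow> u \<in> V \<and> v \<in> V" using sg unfolding simple_graph_def by blast
lemma finV: "finite V" using sg unfolding simple_graph_def by blast
lemma xy: "x \<noteq> y" using Exy Eirr by metis

lemma xnb: "E x v \<Longrightarrow> v = y"
proof -
  assume e: "E x v"
  have "card {w\<in>V. E x w} = 1" using degx unfolding deg_def .
  then obtain z where z: "{w\<in>V. E x w} = {z}" using card_1_singletonE by blast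
  have "y \<in> {w\<in>V. E x w}" "v \<in> {w\<in>V. E x w}" using Exy e EV by auto
  then show "v = y" using z by auto
qed

definition A :: "'a set" where "A = {a. E y a \<and> a \<noteq> x}"

lemma Adef: "E y a \<longleftrightarrow> (a = x \<or> a \<in> A)" unfolding A_def using Esym[OF Exy] by blast
lemma xA: "x \<notin> A" unfolding A_def by blast
lemma AV: "A \<subseteq> V" unfolding A_def using EV by blast
lemma finA: "finite A" using AV finV finite_subset by blast

lemma cardA: "card A \<ge> 2"
proof -
  have "{v\<in>V. E y v} \<subseteq> insert x A" unfolding A_def by blast
  then have "card {v\<in>V. E y v} \<le> card (insert x A)" using finA by (simp add: card_mono)
  also have "\<dots> \<le> Suc (card A)" by (simp add: card_insert_le_m1 card_insert_if)
  finally show ?thesis using degy unfolding deg_def by simp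
qed

lemma two_in_A: "a \<in> A \<Longrightarrow> \<exists>a'\<in>A. a' \<noteq> a"
proof (rule ccontr)
  assume "a \<in> A" "\<not> (\<exists>a'\<in>A. a' \<noteq> a)"
  then have "A = {a}" by blast
  then show False using cardA by simp
qed

abbreviation C :: "'a \<Rightarrow> 'a set" where "C a \<equiv> comp_minus_edge E a y"

lemma Cself: "a \<in> C a" unfolding comp_minus_edge_def walk_from_to_def
  by (intro CollectI exI[of _ "[a]"]) simp

lemma Cclos: "u \<in> C a \<Longrightarrow> E u w \<Longrightarrow> {u, w} \<noteq> {a, y} \<Longrightarrow> w \<in> C a"
  unfolding comp_minus_edge_def using walk_snoc by fastforce

lemma CV: "a \<in> A \<Longrightarrow> C a \<subseteq> V"
proof
  fix v assume a: "a \<in> A" and "v \<in> C a"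
  then obtain xs where "walk_from_to (\<lambda>p q. E p q \<and> {p, q} \<noteq> {a, y}) a v xs"
    unfolding comp_minus_edge_def by blast
  then show "v \<in> V" by (rule walk_closed) (use a AV EV in auto)
qed

lemma Aprops: "a \<in> A \<Longrightarrow> E y a \<and> a \<noteq> x \<and> a \<noteq> y"
  unfolding A_def using Eirr by auto

lemma brA: "a \<in> A \<Longrightarrow> \<exists>xs. induced_path E (C a) xs \<and> length xs \<le> 3 \<and> (length xs = 3 \<longrightarrow> (a = hd xs \<or> a = last xs)) \<and> card (C a) \<noteq> 1"
  using br unfolding A_def nbr_F_tree_def Let_def by blast

lemma cardC: "a \<in> A \<Longrightarrow> card (C a) \<le> 3"
  using brA[of a] unfolding induced_path_def by (metis distinct_card)

lemma finC: "a \<in> A \<Longrightarrow> finite (C a)" using CV finV finite_subset by blast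

lemma yC: "a \<in> A \<Longrightarrow> y \<notin> C a"
proof
  assume a: "a \<in> A" and yc: "y \<in> C a"
  obtain a' where a': "a' \<in> A" "a' \<noteq> a" using two_in_A[OF a] by blast
  have ax: "a \<noteq> x" "a \<noteq> y" "a' \<noteq> x" "a' \<noteq> y" using Aprops a a' by auto
  have "x \<in> C a" using Cclos[OF yc Esym[OF Exy]] ax xy by auto
  moreover have "a' \<in> C a" using Cclos[OF yc, of a'] Aprops[OF a'(1)] ax a' by auto
  ultimately have "{a, a', x, y} \<subseteq> C a" using Cself yc by auto
  then have "card {a, a', x, y} \<le> card (C a)" using finC[OF a] by (simp add: card_mono)
  moreover have "card {a, a', x, y} = 4" using ax a' xy by auto
  ultimately show False using cardC[OF a] by simp
qed

lemma xC: "a \<in> A \<Longrightarrow> x \<notin> C a"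
proof
  assume a: "a \<in> A" and "x \<in> C a"
  then have "y \<in> C a" using Cclos[OF _ Exy] Aprops[OF a] by auto
  then show False using yC a by blast
qed

lemma clos2: "a \<in> A \<Longrightarrow> u \<in> C a \<Longrightarrow> E u w \<Longrightarrow> w \<in> C a \<or> (u = a \<and> w = y)"
  using Cclos[of u a w] yC[of a] by (auto simp: doubleton_eq_iff)

lemma inCa: "a \<in> A \<Longrightarrow> a' \<in> A \<Longrightarrow> a \<in> C a' \<Longrightarrow> a = a'"
proof (rule ccontr)
  assume a: "a \<in> A" "a' \<in> A" "a \<in> C a'" "a \<noteq> a'"
  then have "y \<in> C a'" using Cclos[OF a(3) Esym[OF conjunct1[OF Aprops[OF a(1)]]]] by (auto simp: doubleton_eq_iff)
  then show False using yC a by blast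
qed

lemma extract_br: "a \<in> A \<Longrightarrow> \<exists>b c l. C a = (if l then {a, b, c} else {a, b}) \<and> b \<noteq> a \<and> (l \<longrightarrow> c \<noteq> a \<and> c \<noteq> b)
   \<and> E a b \<and> (l \<longrightarrow> E b c \<and> \<not> E a c)"
proof -
  assume a: "a \<in> A"
  obtain xs where ip: "induced_path E (C a) xs" and l3: "length xs \<le> 3"
    and end3: "length xs = 3 \<longrightarrow> (a = hd xs \<or> a = last xs)" and c1: "card (C a) \<noteq> 1"
    using brA[OF a] by blast
  have sx: "set xs = C a" and dx: "distinct xs"
    and adj: "\<And>u v. u \<in> C a \<Longrightarrow> v \<in> C a \<Longrightarrow> E u v \<longleftrightarrow> (\<exists>i. Suc i < length xs \<and> {xs ! i, xs ! Suc i} = {u, v})"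
    using ip unfolding induced_path_def by blast+
  have "length xs = card (C a)" using sx dx distinct_card by metis
  moreover have "xs \<noteq> []" using sx Cself[of a] by auto
  ultimately have "length xs = 2 \<or> length xs = 3" using l3 c1 by (cases xs) auto
  then show ?thesis
  proof
    assume "length xs = 2"
    then obtain u v where xs: "xs = [u, v]"
      by (metis One_nat_def Suc_1 diff_Suc_1 length_0_conv length_Suc_conv)
    have uv: "u \<in> C a" "v \<in> C a" using sx xs by auto
    have "E u v" using adj[OF uv] xs by (auto intro!: exI[of _ 0])
    moreover have "a = u \<or> a = v" using Cself[of a] sx xs by auto
    moreover have "u \<noteq> v" using dx xs by auto
    ultimately show ?thesis
    proof (elim disjE)
      assume h: "E u v" "a = u" "u \<noteq> v"
      have "C a = {a, v}" using sx xs h(2) by simp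
      then show ?thesis using h
        by (intro exI[of _ v] exI[of _ a] exI[of _ False]) simp
    next
      assume h: "E u v" "a = v" "u \<noteq> v"
      have "C a = {a, u}" using sx xs h(2) by auto
      moreover have "E a u" using Esym[OF h(1)] h(2) by simp
      ultimately show ?thesis using h
        by (intro exI[of _ u] exI[of _ a] exI[of _ False]) simp
    qed
  next
    assume "length xs = 3"
    then have "\<exists>u v w. xs = [u, v, w]" by (auto simp: length_Suc_conv numeral_3_eq_3)
    then obtain u v w where xs: "xs = [u, v, w]" by blast
    have uv: "u \<in> C a" "v \<in> C a" "w \<in> C a" using sx xs by auto
    have d: "u \<noteq> v" "u \<noteq> w" "v \<noteq> w" using dx xs by auto
    have "Suc 0 < length xs \<and> {xs ! 0, xs ! Suc 0} = {u, v}" using xs by simp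
    then have e1: "E u v" using adj[OF uv(1,2)] by blast
    have "Suc 1 < length xs \<and> {xs ! 1, xs ! Suc 1} = {v, w}" using xs by simp
    then have e2: "E v w" using adj[OF uv(2,3)] by blast
    have "\<not> (\<exists>i. Suc i < length xs \<and> {xs ! i, xs ! Suc i} = {u, w})"
    proof
      assume "\<exists>i. Suc i < length xs \<and> {xs ! i, xs ! Suc i} = {u, w}"
      then obtain i where "Suc i < 3" "{xs ! i, xs ! Suc i} = {u, w}" using xs by (metis length_Cons list.size(3) numeral_3_eq_3)
      then have "i = 0 \<or> i = 1" by auto
      then show False using \<open>{xs ! i, xs ! Suc i} = {u, w}\<close> xs d by (auto simp: doubleton_eq_iff)
    qed
    then have e3: "\<not> E u w" using adj[OF uv(1,3)] by blast
    have "a = u \<or> a = w" using end3 xs by auto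
    then show ?thesis
    proof
      assume "a = u" then show ?thesis using sx xs e1 e2 e3 d
        by (intro exI[of _ v] exI[of _ w] exI[of _ True]) auto
    next
      assume "a = w" then show ?thesis using sx xs e1 e2 e3 d Esym[OF e1] Esym[OF e2] Esym[of w u]
        by (intro exI[of _ v] exI[of _ u] exI[of _ True]) auto
    qed
  qed
qed

lemma main: "\<exists>s. well_2_placement V E x s"
proof -
  define P where "P a t = (C a = (if snd (snd t) then {a, fst t, fst (snd t)} else {a, fst t})
    \<and> fst t \<noteq> a \<and> (snd (snd t) \<longrightarrow> fst (snd t) \<noteq> a \<and> fst (snd t) \<noteq> fst t)
   \<and> E a (fst t) \<and> (snd (snd t) \<longrightarrow> E (fst t) (fst (snd t)) \<and> \<not> E a (fst (snd t))))" for a t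
  have "\<forall>a\<in>A. \<exists>t. P a t"
  proof
    fix a assume "a \<in> A"
    then obtain b c l where "C a = (if l then {a, b, c} else {a, b}) \<and> b \<noteq> a \<and> (l \<longrightarrow> c \<noteq> a \<and> c \<noteq> b)
   \<and> E a b \<and> (l \<longrightarrow> E b c \<and> \<not> E a c)" using extract_br by blast
    then have "P a (b, c, l)" unfolding P_def by simp
    then show "\<exists>t. P a t" by blast
  qed
  then obtain f where f0: "\<forall>a\<in>A. P a (f a)" using bchoice by blast
  note f = f0[unfolded P_def]
  define bb where "bb a = fst (f a)" for a
  define cc where "cc a = fst (snd (f a))" for a
  define lg where "lg a = snd (snd (f a))" for a
  have Ccs: "\<And>a. a \<in> A \<Longrightarrow> C a = cset bb cc lg a"
    using f unfolding cset_def bb_def cc_def lg_def by auto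
  have fb: "\<And>a. a \<in> A \<Longrightarrow> bb a \<noteq> a \<and> (lg a \<longrightarrow> cc a \<noteq> a \<and> cc a \<noteq> bb a) \<and> E a (bb a) \<and> (lg a \<longrightarrow> E (bb a) (cc a) \<and> \<not> E a (cc a))"
    using f unfolding bb_def cc_def lg_def by blast
  have incs: "\<And>a. a \<in> A \<Longrightarrow> bb a \<in> C a \<and> (lg a \<longrightarrow> cc a \<in> C a)"
    by (simp add: Ccs cset_def)
  obtain p where p1: "\<forall>a\<in>A. p a \<in> A \<and> p (p a) = a" and p2: "\<forall>a\<in>A. \<forall>b\<in>A. p a = a \<and> p b = b \<longrightarrow> a = b"
    using pairing[OF finA] by blast
  define od where "od = (\<exists>a\<in>A. p a = a)"
  define a0 where "a0 = (if od then (SOME a. a \<in> A \<and> p a = a) else (SOME a. a \<in> A))"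
  have Ane: "A \<noteq> {}" using cardA by auto
  have a0: "a0 \<in> A \<and> (od \<longrightarrow> p a0 = a0)"
  proof (cases od)
    case True
    then have ex: "\<exists>a. a \<in> A \<and> p a = a" unfolding od_def by blast
    have "a0 = (SOME a. a \<in> A \<and> p a = a)" using True a0_def by simp
    then show ?thesis using someI_ex[OF ex] by simp
  next
    case False then show ?thesis unfolding a0_def using Ane by (simp add: some_in_eq)
  qed
  interpret S: struct V E x y A bb cc lg p a0 od
  proof
    show "simple_graph V E" by (rule sg)
    show "E x y" by (rule Exy)
    show "\<And>v. E x v \<Longrightarrow> v = y" by (rule xnb)
    show "\<And>a. E y a \<longleftrightarrow> (a = x \<or> a \<in> A)" by (rule Adef)
    show "x \<notin> A" by (rule xA)
  next
    fix v assume "v \<in> V"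
    then obtain xs where w: "walk_from_to E y v xs"
      using conn Exy EV unfolding connected_graph_def by blast
    have "v \<in> {x, y} \<union> (\<Union>a\<in>A. C a)"
    proof (rule walk_closed[OF w])
      show "y \<in> {x, y} \<union> (\<Union>a\<in>A. C a)" by simp
      show "\<forall>a b. a \<in> {x, y} \<union> (\<Union>a\<in>A. C a) \<longrightarrow> E a b \<longrightarrow> b \<in> {x, y} \<union> (\<Union>a\<in>A. C a)"
      proof (intro allI impI)
        fix u w assume u: "u \<in> {x, y} \<union> (\<Union>a\<in>A. C a)" and e: "E u w"
        show "w \<in> {x, y} \<union> (\<Union>a\<in>A. C a)"
        proof (cases "u = x")
          case True then show ?thesis using xnb e by auto
        next
          case False
          show ?thesis
          proof (cases "u = y")
            case True then show ?thesis using e Adef Cself by auto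
          next
            case False
            then obtain a where "a \<in> A" "u \<in> C a" using u \<open>u \<noteq> x\<close> by auto
            then show ?thesis using clos2 e by blast
          qed
        qed
      qed
    qed
    then show "v = x \<or> v = y \<or> (\<exists>a\<in>A. v \<in> cset bb cc lg a)" using Ccs by auto
  next
    fix a assume a: "a \<in> A"
    show "bb a \<noteq> a \<and> bb a \<noteq> x \<and> bb a \<noteq> y" using fb[OF a] incs[OF a] xC[OF a] yC[OF a] by metis
    show "lg a \<Longrightarrow> cc a \<noteq> a \<and> cc a \<noteq> bb a \<and> cc a \<noteq> x \<and> cc a \<noteq> y"
      using fb[OF a] incs[OF a] xC[OF a] yC[OF a] by metis
    show "E a (bb a)" using fb[OF a] by blast
    show "lg a \<Longrightarrow> E (bb a) (cc a)" using fb[OF a] by blast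
    show "lg a \<Longrightarrow> \<not> E a (cc a)" using fb[OF a] by blast
    show "p a \<in> A" "p (p a) = a" using p1 a by auto
  next
    fix a u w assume a: "a \<in> A" and u: "u \<in> cset bb cc lg a" and e: "E u w"
    then show "w \<in> cset bb cc lg a \<or> (u = a \<and> w = y)" using clos2 Ccs by metis
  next
    fix a a' u assume a: "a \<in> A" "a' \<in> A" "a \<noteq> a'" and u: "u \<in> cset bb cc lg a"
    show "u \<notin> cset bb cc lg a'"
    proof
      assume u': "u \<in> cset bb cc lg a'"
      have uC: "u \<in> C a'" using u' Ccs a by auto
      have ay: "a \<noteq> y" "bb a \<noteq> y" using Aprops[OF a(1)] incs[OF a(1)] yC[OF a(1)] by auto
      have "a \<in> C a'"
      proof -
        consider "u = a" | "u = bb a" | "lg a" "u = cc a" using u unfolding cset_def by (auto split: if_splits)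
        then show ?thesis
        proof cases
          case 1 then show ?thesis using uC by simp
        next
          case 2
          have Eba: "E (bb a) a" using fb[OF a(1)] Esym by blast
          have "bb a \<in> C a'" using uC 2 by simp
          then show ?thesis using clos2[OF a(2) _ Eba] ay by auto
        next
          case 3
          have Eba: "E (bb a) a" using fb[OF a(1)] Esym by blast
          have Ecb: "E (cc a) (bb a)" using fb[OF a(1)] 3 Esym by blast
          have "cc a \<in> C a'" using uC 3 by simp
          then have "bb a \<in> C a'" using clos2[OF a(2) _ Ecb] 3 ay by auto
          then show ?thesis using clos2[OF a(2) _ Eba] ay by auto
        qed
      qed
      then show False using inCa a by blast
    qed
  next
    show "a0 \<in> A" using a0 by blast
    show "od \<Longrightarrow> p a0 = a0" using a0 by blast
    show "\<not> od \<Longrightarrow> p a0 \<noteq> a0" using a0 unfolding od_def by blast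
    fix a assume "a \<in> A" "p a = a"
    then show "od \<and> a = a0" using a0 p2 unfolding od_def by blast
  qed
  show ?thesis using S.well by blast
qed

end


theorem lemma3p8:
  fixes V :: "'a set" and E :: "'a \<Rightarrow> 'a \<Rightarrow> bool" and x y :: 'a
  assumes "is_tree V E"
    and "\<not> is_star V E"
    and "E x y"
    and "deg V E x = 1"
    and "deg V E y \<ge> 3"
    and "\<forall>y'. E y y' \<and> y' \<noteq> x \<longrightarrow>
           nbr_F_tree E y' y \<and> card (comp_minus_edge E y' y) \<noteq> 1"
  shows "\<exists>s. well_2_placement V E x s"
  using orig.main[OF orig.intro[OF assms(1,3,4,5,6)]] .

end
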